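(* For all integers $m,n\ge 0$ and all real $t$, $$H_{m,n}(t)=m!\,n!\left(\frac{1}{\sqrt2}\right)^{m+n}\sum_{k=0}^{m}\sum_{j=0}^{n}\frac{H_{k,j}(t/\sqrt2)}{k!\,j!}\,\frac{H_{m-k,n-j}(t/\sqrt2)}{(m-k)!\,(n-j)!}.$$
   Context: For integers $m,n\ge 0$, the two-index Hermite polynomial is $H_{m,n}(x)=\left(-\frac{d}{dx}+2x\right)^m(x^n)$, i.e. the operator $f\mapsto -f'+2xf$ applied $m$ times to $x^n$. *)

theory Defs
  imports "HOL-Analysis.Analysis" "HOL-Computational_Algebra.Polynomial"
begin

definition herm_op :: "real poly \<Rightarrow> real poly" where
  "herm_op p = - pderiv p + [:0, 2:] * p"

definition H2 :: "nat \<Rightarrow> nat \<Rightarrow> real poly" where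
  "H2 m n = (herm_op ^^ m) (monom 1 n)"

definition Hmn :: "nat \<Rightarrow> nat \<Rightarrow> real \<Rightarrow> real" where
  "Hmn m n x = poly (H2 m n) x"

end

theory Submission
  imports Defs
begin

definition sc :: "real poly \<Rightarrow> real poly" where
  "sc p = pcompose p [:0, 1 / sqrt 2:]"

lemma herm_op_alt: "herm_op p = smult 2 (pCons 0 p) - pderiv p"
  by (simp add: herm_op_def)

lemma herm_op_add: "herm_op (p + q) = herm_op p + herm_op q"
  by (simp add: herm_op_alt pderiv_add smult_add_right)

lemma herm_op_smult: "herm_op (smult c p) = smult c (herm_op p)"
  by (simp add: herm_op_alt pderiv_smult smult_diff_right mult.commute)

lemma herm_op_zero: "herm_op 0 = 0"
  by (simp add: herm_op_alt)

lemma herm_op_sum: "herm_op (sum f A) = (\<Sum>i\<in>A. herm_op (f i))"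
  by (induction A rule: infinite_finite_induct) (simp_all add: herm_op_add herm_op_zero)

lemma sc_pCons0: "sc (pCons 0 p) = smult (1 / sqrt 2) (pCons 0 (sc p))"
  by (simp add: sc_def pcompose_pCons)

lemma sc_smult: "sc (smult c p) = smult c (sc p)"
  by (simp add: sc_def pcompose_smult)

lemma sc_minus: "sc (p - q) = sc p - sc q"
  by (simp add: sc_def pcompose_diff)

lemma herm_op_sc:
  "herm_op (sc p * sc q) = smult (1 / sqrt 2) (sc (herm_op p) * sc q + sc p * sc (herm_op q))"
proof -
  have d: "pderiv (sc p) = smult (1/sqrt 2) (sc (pderiv p))" for p
    by (simp add: sc_def pderiv_pcompose pderiv_pCons)
  have s2: "(1 / sqrt 2) * (1 / sqrt 2) = (1::real)/2"
    by (simp add: field_simps)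
  show ?thesis
    unfolding herm_op_alt
    by (simp add: sc_smult sc_minus sc_pCons0 pderiv_mult d algebra_simps smult_add_right smult_diff_right s2 flip: smult_add_left)
qed

lemma comb_sum:
  fixes f g :: "nat \<Rightarrow> 'a::comm_ring_1"
  shows "(\<Sum>k=0..m. of_nat (Suc k) * f (Suc k) * g (m - k) + f k * (of_nat (Suc m - k) * g (Suc m - k)))
       = of_nat (Suc m) * (\<Sum>k=0..Suc m. f k * g (Suc m - k))"
proof -
  have A: "(\<Sum>k=0..m. of_nat (Suc k) * f (Suc k) * g (m - k)) = (\<Sum>k=0..Suc m. of_nat k * f k * g (Suc m - k))"
  proof -
    have "(\<Sum>k=0..m. of_nat (Suc k) * f (Suc k) * g (m - k)) = (\<Sum>k=Suc 0..Suc m. of_nat k * f k * g (Suc m - k))"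
      by (subst sum.shift_bounds_cl_Suc_ivl) simp
    also have "\<dots> = (\<Sum>k=0..Suc m. of_nat k * f k * g (Suc m - k))"
      by (subst (2) sum.atLeast_Suc_atMost) simp_all
    finally show ?thesis .
  qed
  have B: "(\<Sum>k=0..m. f k * (of_nat (Suc m - k) * g (Suc m - k))) = (\<Sum>k=0..Suc m. of_nat (Suc m - k) * f k * g (Suc m - k))"
    by (simp add: mult_ac)
  have C: "(\<Sum>k=0..Suc m. of_nat k * f k * g (Suc m - k) + of_nat (Suc m - k) * f k * g (Suc m - k))
      = (\<Sum>k=0..Suc m. of_nat (Suc m) * (f k * g (Suc m - k)))"
  proof (rule sum.cong)
    fix k assume "k \<in> {0..Suc m}"
    then have "of_nat k + of_nat (Suc m - k) = (of_nat (Suc m) :: 'a)"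
      by (simp flip: of_nat_add)
    then show "of_nat k * f k * g (Suc m - k) + of_nat (Suc m - k) * f k * g (Suc m - k) = of_nat (Suc m) * (f k * g (Suc m - k))"
      by (metis distrib_right mult.assoc)
  qed simp
  have "(\<Sum>k=0..m. of_nat (Suc k) * f (Suc k) * g (m - k) + f k * (of_nat (Suc m - k) * g (Suc m - k)))
     = (\<Sum>k=0..m. of_nat (Suc k) * f (Suc k) * g (m - k)) + (\<Sum>k=0..m. f k * (of_nat (Suc m - k) * g (Suc m - k)))"
    by (rule sum.distrib)
  also have "\<dots> = (\<Sum>k=0..Suc m. of_nat k * f k * g (Suc m - k) + of_nat (Suc m - k) * f k * g (Suc m - k))"
    unfolding A B by (rule sum.distrib[symmetric])
  also have "\<dots> = of_nat (Suc m) * (\<Sum>k=0..Suc m. f k * g (Suc m - k))"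
    unfolding C by (rule sum_distrib_left[symmetric])
  finally show ?thesis .
qed

definition F :: "nat \<Rightarrow> nat \<Rightarrow> real poly" where
  "F k j = smult (1 / (fact k * fact j)) (H2 k j)"

lemma H2_Suc: "H2 (Suc k) j = herm_op (H2 k j)"
  by (simp add: H2_def)

lemma herm_op_F: "herm_op (F k j) = smult (of_nat (Suc k)) (F (Suc k) j)"
proof -
  have "(1::real) / (fact k * fact j) = of_nat (Suc k) * (1 / (fact (Suc k) * fact j))"
  proof -
    have a: "(fact (Suc k)::real) = of_nat (Suc k) * fact k" by (rule fact_Suc)
    have b: "(of_nat (Suc k)::real) \<noteq> 0" by (rule of_nat_neq_0)
    have c: "(fact k::real) \<noteq> 0" "(fact j::real) \<noteq> 0" by simp_all
    show ?thesis unfolding a using b c by (simp add: field_simps del: of_nat_Suc)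
  qed
  then show ?thesis by (simp add: F_def herm_op_smult H2_Suc)
qed

definition T :: "nat \<Rightarrow> nat \<Rightarrow> real poly" where
  "T m n = (\<Sum>k = 0..m. \<Sum>j = 0..n. sc (F k j) * sc (F (m - k) (n - j)))"

lemma smult_of_nat: "smult (of_nat c) p = of_nat c * p"
  by (simp add: of_nat_poly)

lemma smult_sum2: "smult c (sum f A) = (\<Sum>i\<in>A. smult c (f i))"
  by (induction A rule: infinite_finite_induct) (simp_all add: smult_add_right)

lemma herm_op_T: "herm_op (T m n) = smult (1 / sqrt 2) (of_nat (Suc m) * T (Suc m) n)"
proof -
  have "herm_op (T m n) = (\<Sum>k = 0..m. \<Sum>j = 0..n. smult (1 / sqrt 2)
     (of_nat (Suc k) * sc (F (Suc k) j) * sc (F (m - k) (n - j)) +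
      sc (F k j) * (of_nat (Suc m - k) * sc (F (Suc m - k) (n - j)))))"
    unfolding T_def herm_op_sum
  proof (intro sum.cong refl)
    fix k j assume k: "k \<in> {0..m}" and "j \<in> {0..n}"
    then have e: "Suc (m - k) = Suc m - k" by auto
    show "herm_op (sc (F k j) * sc (F (m - k) (n - j))) = smult (1 / sqrt 2)
     (of_nat (Suc k) * sc (F (Suc k) j) * sc (F (m - k) (n - j)) +
      sc (F k j) * (of_nat (Suc m - k) * sc (F (Suc m - k) (n - j))))"
      by (simp only: herm_op_sc herm_op_F sc_smult mult_smult_left mult_smult_right e)
        (simp only: smult_of_nat mult.assoc mult.left_commute)
  qed
  also have "\<dots> = smult (1 / sqrt 2) (\<Sum>j = 0..n. \<Sum>k = 0..m.
     (of_nat (Suc k) * sc (F (Suc k) j) * sc (F (m - k) (n - j)) +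
      sc (F k j) * (of_nat (Suc m - k) * sc (F (Suc m - k) (n - j)))))"
    by (simp add: smult_sum2 sum.swap[of _ "{0..m}"])
  also have "\<dots> = smult (1 / sqrt 2) (\<Sum>j = 0..n. of_nat (Suc m) * (\<Sum>k = 0..Suc m. sc (F k j) * sc (F (Suc m - k) (n - j))))"
    by (subst comb_sum[of "\<lambda>k. sc (F k _)" "\<lambda>k. sc (F k _)", symmetric]) (rule refl)
  also have "\<dots> = smult (1 / sqrt 2) (of_nat (Suc m) * T (Suc m) n)"
    unfolding T_def sum_distrib_left by (subst (2) sum.swap) (rule refl)
  finally show ?thesis .
qed

lemma poly_sc: "poly (sc p) x = poly p (x / sqrt 2)"
  by (simp add: sc_def poly_pcompose)

lemma poly_F: "poly (F k j) y = Hmn k j y / (fact k * fact j)"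
  by (simp add: F_def Hmn_def)

lemma poly_T: "poly (T m n) x = (\<Sum>k = 0..m. \<Sum>j = 0..n.
       (Hmn k j (x / sqrt 2) / (fact k * fact j)) *
       (Hmn (m - k) (n - j) (x / sqrt 2) / (fact (m - k) * fact (n - j))))"
  by (simp add: T_def poly_sum poly_sc poly_F)

lemma base: "H2 0 n = smult (fact 0 * fact n * (1 / sqrt 2) ^ (0 + n)) (T 0 n)"
proof (rule poly_eq_poly_eq_iff[THEN iffD1], rule ext)
  fix x :: real
  define y where "y = x / sqrt 2"
  have H0: "Hmn 0 j z = z ^ j" for j z by (simp add: Hmn_def H2_def poly_monom)
  have "fact n * poly (T 0 n) x = (\<Sum>j = 0..n. of_nat (n choose j) * y ^ j * y ^ (n - j))"
  proof -
    have p0: "poly (T 0 n) x = (\<Sum>j = 0..n. y ^ j / fact j * (y ^ (n - j) / fact (n - j)))"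
      by (simp add: poly_T H0 y_def)
    show ?thesis
      unfolding p0 sum_distrib_left
      by (intro sum.cong refl) (simp add: binomial_fact field_simps)
  qed
  also have "\<dots> = (y + y) ^ n" by (simp only: binomial_ring atLeast0AtMost)
  also have "\<dots> = (sqrt 2 * x) ^ n"
  proof -
    have "y + y = sqrt 2 * x" unfolding y_def
      by (simp add: field_simps flip: mult.assoc)
    then show ?thesis by simp
  qed
  finally have e: "fact n * poly (T 0 n) x = (sqrt 2 * x) ^ n" .
  have "poly (smult (fact 0 * fact n * (1 / sqrt 2) ^ (0 + n)) (T 0 n)) x
      = (1 / sqrt 2) ^ n * (fact n * poly (T 0 n) x)" by simp
  also have "\<dots> = x ^ n" unfolding e by (simp add: power_mult_distrib[symmetric])
  finally show "poly (H2 0 n) x = poly (smult (fact 0 * fact n * (1 / sqrt 2) ^ (0 + n)) (T 0 n)) x"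
    by (simp add: H2_def poly_monom)
qed

lemma H2_T: "H2 m n = smult (fact m * fact n * (1 / sqrt 2) ^ (m + n)) (T m n)"
proof (induction m arbitrary: n)
  case 0 show ?case by (rule base)
next
  case (Suc m)
  have c: "fact m * fact n * (1 / sqrt 2) ^ (m + n) * ((1 / sqrt 2) * of_nat (Suc m))
      = (fact (Suc m) * fact n * (1 / sqrt 2) ^ (Suc m + n) :: real)"
    by (simp add: fact_Suc algebra_simps del: of_nat_Suc)
  have "H2 (Suc m) n = smult (fact m * fact n * (1 / sqrt 2) ^ (m + n))
      (smult (1 / sqrt 2) (smult (of_nat (Suc m)) (T (Suc m) n)))"
    by (simp only: H2_Suc Suc.IH herm_op_smult herm_op_T smult_of_nat)
  also have "\<dots> = smult (fact (Suc m) * fact n * (1 / sqrt 2) ^ (Suc m + n)) (T (Suc m) n)"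
    by (simp only: smult_smult c)
  finally show ?case .
qed

theorem mainTheorem10:
  fixes m n :: nat and t :: real
  shows "Hmn m n t = fact m * fact n * (1 / sqrt 2) ^ (m + n) *
    (\<Sum>k = 0..m. \<Sum>j = 0..n.
       (Hmn k j (t / sqrt 2) / (fact k * fact j)) *
       (Hmn (m - k) (n - j) (t / sqrt 2) / (fact (m - k) * fact (n - j))))"
  by (simp only: Hmn_def[of m n] H2_T poly_smult poly_T)

end
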